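(* For $q\ge1$, the generating function $P_{q,1}(x)=\sum_{n\ge0}p_nx^n$, where $p_n$ is the total number of occurrences of the letter $1$ in all $q$-decreasing words of length $n$, is $$P_{q,1}(x)=\frac{x\left(1-qx^q+qx^{q+1}-2x^{q+1}+x^{2q+2}\right)}{\left(1-2x+x^{q+2}\right)^2},$$ and the generating function for the total number of occurrences of the letter $0$ in all $q$-decreasing words of length $n$ is $$P_{q,0}(x)=\frac{x\left(1-x^q\right)}{\left(1-2x+x^{q+2}\right)^2}.$$
   Context: For $q\ge1$, a binary word is $q$-decreasing if for every maximal run of $0$s, of length $a>0$, together with the (possibly empty) maximal run of $1$s immediately following it, of length $b$, one has $q\cdot a>b$. *)

theory Defs
  imports "HOL-Computational_Algebra.Formal_Power_Series"
begin

text \<open>A maximal run of 0s occupies positions [i,j) with i<j; the maximal run of 1s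
immediately following it occupies positions [j,k) (possibly empty, k = j).\<close>

definition q_decreasing :: "nat \<Rightarrow> nat list \<Rightarrow> bool" where
  "q_decreasing q w \<longleftrightarrow>
     (\<forall>i j k. i < j \<and> j \<le> k \<and> k \<le> length w
        \<and> (\<forall>t. i \<le> t \<and> t < j \<longrightarrow> w ! t = 0)
        \<and> (i = 0 \<or> w ! (i - 1) = 1)
        \<and> (\<forall>t. j \<le> t \<and> t < k \<longrightarrow> w ! t = 1)
        \<and> (k = length w \<or> w ! k = 0)
        \<longrightarrow> k - j < q * (j - i))"

definition q_dec_words :: "nat \<Rightarrow> nat \<Rightarrow> nat list set" where
  "q_dec_words q n = {w. length w = n \<and> set w \<subseteq> {0, 1} \<and> q_decreasing q w}"

definition letter_total :: "nat \<Rightarrow> nat \<Rightarrow> nat \<Rightarrow> nat" where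
  "letter_total q c n = (\<Sum>w\<in>q_dec_words q n. count_list w c)"

end

theory Submission
  imports Defs
begin

unbundle fps_syntax


lemma qdD:
  assumes "q_decreasing q w" "i < j" "j \<le> k" "k \<le> length w"
    "\<And>t. i \<le> t \<Longrightarrow> t < j \<Longrightarrow> w ! t = 0"
    "i = 0 \<or> w ! (i - 1) = 1"
    "\<And>t. j \<le> t \<Longrightarrow> t < k \<Longrightarrow> w ! t = 1"
    "k = length w \<or> w ! k = 0"
  shows "k - j < q * (j - i)"
  apply (rule assms(1)[unfolded q_decreasing_def, rule_format])
  using assms(2-) by (intro conjI allI impI) auto

lemma qdI:
  assumes "\<And>i j k. i < j \<Longrightarrow> j \<le> k \<Longrightarrow> k \<le> length w \<Longrightarrow>
    (\<And>t. i \<le> t \<Longrightarrow> t < j \<Longrightarrow> w ! t = 0) \<Longrightarrow>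
    i = 0 \<or> w ! (i - 1) = 1 \<Longrightarrow>
    (\<And>t. j \<le> t \<Longrightarrow> t < k \<Longrightarrow> w ! t = 1) \<Longrightarrow>
    k = length w \<or> w ! k = 0 \<Longrightarrow> k - j < q * (j - i)"
  shows "q_decreasing q w"
  unfolding q_decreasing_def
proof (intro allI impI)
  fix i j k assume H: "i < j \<and> j \<le> k \<and> k \<le> length w
        \<and> (\<forall>t. i \<le> t \<and> t < j \<longrightarrow> w ! t = 0)
        \<and> (i = 0 \<or> w ! (i - 1) = 1)
        \<and> (\<forall>t. j \<le> t \<and> t < k \<longrightarrow> w ! t = 1)
        \<and> (k = length w \<or> w ! k = 0)"
  show "k - j < q * (j - i)"
    apply (rule assms)
    using H by simp_all
qed

lemma qd_cons1: "q_decreasing q (1 # w) \<longleftrightarrow> q_decreasing q w"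
proof
  assume H: "q_decreasing q (1 # w)"
  show "q_decreasing q w"
  proof (rule qdI)
    fix i j k assume A: "i < j" "j \<le> k" "k \<le> length w"
        "\<And>t. i \<le> t \<Longrightarrow> t < j \<Longrightarrow> w ! t = 0"
        "i = 0 \<or> w ! (i - 1) = 1"
        "\<And>t. j \<le> t \<Longrightarrow> t < k \<Longrightarrow> w ! t = 1"
        "k = length w \<or> w ! k = 0"
    have "Suc k - Suc j < q * (Suc j - Suc i)"
    proof (rule qdD[OF H])
      fix t assume "Suc i \<le> t" "t < Suc j" then show "(1#w) ! t = 0"
        using A(4)[of "t - 1"] by (cases t) auto
    next
      fix t assume "Suc j \<le> t" "t < Suc k" then show "(1#w) ! t = 1"
        using A(6)[of "t - 1"] by (cases t) auto
    next
      show "Suc i = 0 \<or> (1 # w) ! (Suc i - 1) = 1" using A(5) by (cases i) auto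
    qed (use A(1,2,3,7) in auto)
    then show "k - j < q * (j - i)" by simp
  qed
next
  assume H: "q_decreasing q w"
  show "q_decreasing q (1 # w)"
  proof (rule qdI)
    fix i j k assume A: "i < j" "j \<le> k" "k \<le> length (1#w)"
        "\<And>t. i \<le> t \<Longrightarrow> t < j \<Longrightarrow> (1#w) ! t = 0"
        "i = 0 \<or> (1#w) ! (i - 1) = 1"
        "\<And>t. j \<le> t \<Longrightarrow> t < k \<Longrightarrow> (1#w) ! t = 1"
        "k = length (1#w) \<or> (1#w) ! k = 0"
    have "i \<noteq> 0" using A(1) A(4)[of 0] by auto
    then obtain i' where i: "i = Suc i'" by (cases i) auto
    obtain j' where j: "j = Suc j'" using A(1) i by (cases j) auto
    obtain k' where k: "k = Suc k'" using A(2) j by (cases k) auto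
    have "k' - j' < q * (j' - i')"
    proof (rule qdD[OF H])
      fix t assume "i' \<le> t" "t < j'" then show "w ! t = 0"
        using A(4)[of "Suc t"] i j by auto
    next
      fix t assume "j' \<le> t" "t < k'" then show "w ! t = 1"
        using A(6)[of "Suc t"] j k by auto
    next
      show "i' = 0 \<or> w ! (i' - 1) = 1" using A(5) i by (cases i') auto
    qed (use A(1,2,3,7) i j k in auto)
    then show "k - j < q * (j - i)" using i j k by simp
  qed
qed

lemma qd_split:
  assumes u: "u \<noteq> []" "last u = 1" and v: "v = [] \<or> hd v = 0"
  shows "q_decreasing q (u @ v) \<longleftrightarrow> q_decreasing q u \<and> q_decreasing q v"
proof -
  define n where "n = length u"
  have n0: "n > 0" using u n_def by simp
  have un: "u ! (n - 1) = 1" using u n_def by (simp add: last_conv_nth)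
  have uvn: "v \<noteq> [] \<Longrightarrow> (u @ v) ! n = 0" using v n_def by (simp add: nth_append hd_conv_nth)
  have nth1: "\<And>t. t < n \<Longrightarrow> (u @ v) ! t = u ! t" using n_def by (simp add: nth_append)
  have nth2: "\<And>t. n \<le> t \<Longrightarrow> (u @ v) ! t = v ! (t - n)" using n_def by (simp add: nth_append)
  show ?thesis
  proof (intro iffI conjI)
    assume H: "q_decreasing q (u @ v)"
    show "q_decreasing q u"
    proof (rule qdI)
      fix i j k assume A: "i < j" "j \<le> k" "k \<le> length u"
        "\<And>t. i \<le> t \<Longrightarrow> t < j \<Longrightarrow> u ! t = 0"
        "i = 0 \<or> u ! (i - 1) = 1"
        "\<And>t. j \<le> t \<Longrightarrow> t < k \<Longrightarrow> u ! t = 1"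
        "k = length u \<or> u ! k = 0"
      show "k - j < q * (j - i)"
      proof (rule qdD[OF H])
        show "k = length (u @ v) \<or> (u @ v) ! k = 0"
          using A(3,7) uvn nth1 n_def by (cases "v = []") (auto simp: nth_append)
      qed (use A nth1 n_def in auto)
    qed
  next
    assume H: "q_decreasing q (u @ v)"
    show "q_decreasing q v"
    proof (rule qdI)
      fix i j k assume A: "i < j" "j \<le> k" "k \<le> length v"
        "\<And>t. i \<le> t \<Longrightarrow> t < j \<Longrightarrow> v ! t = 0"
        "i = 0 \<or> v ! (i - 1) = 1"
        "\<And>t. j \<le> t \<Longrightarrow> t < k \<Longrightarrow> v ! t = 1"
        "k = length v \<or> v ! k = 0"
      have "(k + n) - (j + n) < q * ((j + n) - (i + n))"
      proof (rule qdD[OF H])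
        fix t assume "i + n \<le> t" "t < j + n" then show "(u @ v) ! t = 0"
          using A(4)[of "t - n"] nth2[of t] by auto
      next
        fix t assume "j + n \<le> t" "t < k + n" then show "(u @ v) ! t = 1"
          using A(6)[of "t - n"] nth2[of t] by auto
      next
        show "i + n = 0 \<or> (u @ v) ! (i + n - 1) = 1"
        proof (cases "i = 0")
          case True then show ?thesis using un nth1[of "n - 1"] n0 by simp
        next
          case False then show ?thesis using A(5) nth2[of "i + n - 1"] by simp
        qed
      next
        show "k + n = length (u @ v) \<or> (u @ v) ! (k + n) = 0"
          using A(7) nth2[of "k + n"] n_def by auto
      qed (use A n_def in auto)
      then show "k - j < q * (j - i)" by simp
    qed
  next
    assume H: "q_decreasing q u \<and> q_decreasing q v"
    show "q_decreasing q (u @ v)"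
    proof (rule qdI)
      fix i j k assume A: "i < j" "j \<le> k" "k \<le> length (u @ v)"
        "\<And>t. i \<le> t \<Longrightarrow> t < j \<Longrightarrow> (u @ v) ! t = 0"
        "i = 0 \<or> (u @ v) ! (i - 1) = 1"
        "\<And>t. j \<le> t \<Longrightarrow> t < k \<Longrightarrow> (u @ v) ! t = 1"
        "k = length (u @ v) \<or> (u @ v) ! k = 0"
      show "k - j < q * (j - i)"
      proof (cases "i < n")
        case True
        have jn: "j < n"
        proof (rule ccontr)
          assume "\<not> j < n"
          then have "(u @ v) ! (n - 1) = 0" using A(4)[of "n - 1"] True by auto
          then show False using un nth1[of "n - 1"] n0 by simp
        qed
        have kn: "k \<le> n"
        proof (rule ccontr)
          assume c: "\<not> k \<le> n"
          then have "v \<noteq> []" using A(3) n_def by auto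
          then have "(u @ v) ! n = 0" using uvn by simp
          moreover have "(u @ v) ! n = 1" using A(6)[of n] c jn by auto
          ultimately show False by simp
        qed
        show ?thesis
        proof (rule qdD[of q u])
          show "q_decreasing q u" using H by simp
          show "k = length u \<or> u ! k = 0" using A(7) kn nth1[of k] n_def by (cases "k = n") auto
          show "i = 0 \<or> u ! (i - 1) = 1" using A(5) nth1[of "i - 1"] True by auto
        qed (use A nth1 jn kn n_def in auto)
      next
        case False
        have "(k - n) - (j - n) < q * ((j - n) - (i - n))"
        proof (rule qdD[of q v])
          show "q_decreasing q v" using H by simp
          show "k - n = length v \<or> v ! (k - n) = 0"
            using A(1,2,3,7) nth2[of k] False n_def by auto
          show "i - n = 0 \<or> v ! (i - n - 1) = 1"
            using A(5) nth2[of "i - 1"] False by (cases "i = n") auto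
        next
          fix t assume "i - n \<le> t" "t < j - n" then show "v ! t = 0"
            using A(4)[of "t + n"] nth2[of "t + n"] False by auto
        next
          fix t assume "j - n \<le> t" "t < k - n" then show "v ! t = 1"
            using A(6)[of "t + n"] nth2[of "t + n"] False A(1,2) by auto
        qed (use A False n_def in auto)
        then show ?thesis using False A(1,2) by simp
      qed
    qed
  qed
qed

lemma qd_block:
  assumes a: "a \<ge> 1"
  shows "q_decreasing q (replicate a 0 @ replicate b 1) \<longleftrightarrow> b < q * a"
proof
  let ?w = "replicate a 0 @ replicate b (1::nat)"
  have nth: "\<And>t. t < a + b \<Longrightarrow> ?w ! t = (if t < a then 0 else 1)"
    by (simp add: nth_append)
  assume H: "q_decreasing q ?w"
  have "(a + b) - a < q * (a - 0)"
    by (rule qdD[OF H]) (use a nth in auto)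
  then show "b < q * a" by simp
next
  let ?w = "replicate a 0 @ replicate b (1::nat)"
  have nth: "\<And>t. t < a + b \<Longrightarrow> ?w ! t = (if t < a then 0 else 1)"
    by (simp add: nth_append)
  assume B: "b < q * a"
  then have q: "q \<ge> 1" by (cases q) auto
  show "q_decreasing q ?w"
  proof (rule qdI)
    fix i j k assume A: "i < j" "j \<le> k" "k \<le> length ?w"
        "\<And>t. i \<le> t \<Longrightarrow> t < j \<Longrightarrow> ?w ! t = 0"
        "i = 0 \<or> ?w ! (i - 1) = 1"
        "\<And>t. j \<le> t \<Longrightarrow> t < k \<Longrightarrow> ?w ! t = 1"
        "k = length ?w \<or> ?w ! k = 0"
    have ia: "i < a"
      using A(1,2,3) A(4)[of i] nth[of i] by (auto split: if_splits)
    have i0: "i = 0"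
    proof (rule ccontr)
      assume i: "i \<noteq> 0"
      then have "?w ! (i - 1) = 1" using A(5) by simp
      moreover have "?w ! (i - 1) = 0" using nth[of "i - 1"] ia i by simp
      ultimately show False by simp
    qed
    have ja: "j \<le> a"
    proof (rule ccontr)
      assume "\<not> j \<le> a"
      then show False using A(2,3) A(4)[of a] nth[of a] i0 ia by auto
    qed
    show "k - j < q * (j - i)"
    proof (cases "j < a")
      case True
      have "k = j"
      proof (rule ccontr)
        assume "k \<noteq> j"
        then show False using A(2,3) A(6)[of j] nth[of j] True by auto
      qed
      then show ?thesis using q A(1) by simp
    next
      case False
      then have "j = a" using ja by simp
      then show ?thesis using A(3) B i0 by simp
    qed
  qed
qed



definition Yw :: "nat \<Rightarrow> nat \<Rightarrow> nat list set" where
  "Yw q n = {w \<in> q_dec_words q n. w = [] \<or> hd w = 0}"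

definition Qs :: "nat \<Rightarrow> nat \<Rightarrow> (nat \<times> nat) set" where
  "Qs q n = {(a, b). 1 \<le> a \<and> 1 \<le> b \<and> b < q * a \<and> a + b \<le> n}"

definition Pp :: "nat \<Rightarrow> nat \<Rightarrow> (nat \<times> nat) set" where
  "Pp q n = {(a, b). 1 \<le> a \<and> 1 \<le> b \<and> b < q * a \<and> a + b = n}"

definition blk :: "nat \<Rightarrow> nat \<Rightarrow> nat list \<Rightarrow> nat list" where
  "blk a b r = replicate a 0 @ replicate b 1 @ r"

lemma fin_words: "finite (q_dec_words q n)"
proof -
  have "q_dec_words q n \<subseteq> {xs. set xs \<subseteq> {0,1} \<and> length xs = n}"
    unfolding q_dec_words_def by auto
  moreover have "finite {xs. set xs \<subseteq> {0::nat,1} \<and> length xs = n}"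
    by (rule finite_lists_length_eq) simp
  ultimately show ?thesis by (rule finite_subset)
qed

lemma fin_Yw: "finite (Yw q n)"
  unfolding Yw_def using fin_words by simp

lemma fin_Qs: "finite (Qs q n)"
proof -
  have "Qs q n \<subseteq> {..n} \<times> {..n}" unfolding Qs_def by auto
  then show ?thesis by (rule finite_subset) simp
qed

lemma fin_Pp: "finite (Pp q n)"
proof -
  have "Pp q n \<subseteq> {..n} \<times> {..n}" unfolding Pp_def by auto
  then show ?thesis by (rule finite_subset) simp
qed

lemma S_rec:
  "q_dec_words q (Suc n) = Yw q (Suc n) \<union> Cons 1 ` q_dec_words q n"
proof
  show "q_dec_words q (Suc n) \<subseteq> Yw q (Suc n) \<union> Cons 1 ` q_dec_words q n"
  proof
    fix w assume w: "w \<in> q_dec_words q (Suc n)"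
    then obtain x w' where xw: "w = x # w'" unfolding q_dec_words_def by (cases w) auto
    show "w \<in> Yw q (Suc n) \<union> Cons 1 ` q_dec_words q n"
    proof (cases "x = 0")
      case True then show ?thesis using w xw unfolding Yw_def by auto
    next
      case False
      then have "x = 1" using w xw unfolding q_dec_words_def by auto
      then have "w' \<in> q_dec_words q n" using w xw qd_cons1 unfolding q_dec_words_def by auto
      then show ?thesis using xw \<open>x = 1\<close> by auto
    qed
  qed
next
  show "Yw q (Suc n) \<union> Cons 1 ` q_dec_words q n \<subseteq> q_dec_words q (Suc n)"
    unfolding Yw_def q_dec_words_def using qd_cons1 by auto
qed

lemma S_disj: "Yw q (Suc n) \<inter> Cons 1 ` q_dec_words q n = {}"
  unfolding Yw_def by auto

lemma S_sum:
  "(\<Sum>w\<in>q_dec_words q (Suc n). f w) = (\<Sum>w\<in>Yw q (Suc n). f w) + (\<Sum>w\<in>q_dec_words q n. f (1 # w))"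
proof -
  have "(\<Sum>w\<in>q_dec_words q (Suc n). f w) = (\<Sum>w\<in>Yw q (Suc n). f w) + (\<Sum>w\<in>Cons 1 ` q_dec_words q n. f w)"
    unfolding S_rec by (rule sum.union_disjoint) (use fin_Yw fin_words S_disj in auto)
  also have "(\<Sum>w\<in>Cons 1 ` q_dec_words q n. f w) = (\<Sum>w\<in>q_dec_words q n. f (1 # w))"
    by (rule sum.reindex_cong[where l = "Cons 1"]) auto
  finally show ?thesis .
qed

lemma blk_tw:
  assumes "b \<ge> 1" "r = [] \<or> hd r = 0"
  shows "takeWhile (\<lambda>x. x = 0) (blk a b r) = replicate a 0"
    "dropWhile (\<lambda>x. x = 0) (blk a b r) = replicate b 1 @ r"
    "takeWhile (\<lambda>x. x = 1) (replicate b 1 @ r) = replicate b 1"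
    "dropWhile (\<lambda>x. x = 1) (replicate b 1 @ r) = r"
proof -
  obtain b' where b: "b = Suc b'" using assms(1) by (cases b) auto
  have r1: "takeWhile (\<lambda>x. x = 1) r = []" "dropWhile (\<lambda>x. x = 1) r = r"
    using assms(2) by (cases r; simp)+
  show "takeWhile (\<lambda>x. x = 0) (blk a b r) = replicate a 0"
    "dropWhile (\<lambda>x. x = 0) (blk a b r) = replicate b 1 @ r"
    unfolding blk_def b by (induct a; simp)+
  show "takeWhile (\<lambda>x. x = 1) (replicate b 1 @ r) = replicate b 1"
    "dropWhile (\<lambda>x. x = 1) (replicate b 1 @ r) = r"
    using r1 by (induct b; simp)+
qed

lemma blk_inj:
  assumes "b \<ge> 1" "r = [] \<or> hd r = 0" "b' \<ge> 1" "r' = [] \<or> hd r' = 0"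
    and eq: "blk a b r = blk a' b' r'"
  shows "a = a' \<and> b = b' \<and> r = r'"
proof -
  have "replicate a (0::nat) = replicate a' 0"
    using blk_tw(1)[OF assms(1,2), of a] blk_tw(1)[OF assms(3,4), of a'] eq by simp
  then have a: "a = a'" by simp
  have e2: "replicate b 1 @ r = replicate b' 1 @ r'"
    using blk_tw(2)[OF assms(1,2), of a] blk_tw(2)[OF assms(3,4), of a'] eq by simp
  then have "replicate b (1::nat) = replicate b' 1"
    using blk_tw(3)[OF assms(1,2)] blk_tw(3)[OF assms(3,4)] by metis
  then have b: "b = b'" by simp
  have "r = r'" using e2 blk_tw(4)[OF assms(1,2)] blk_tw(4)[OF assms(3,4)] by metis
  then show ?thesis using a b by simp
qed

lemma blk_in_Yw:
  assumes "(a, b) \<in> Qs q n" "r \<in> Yw q (n - a - b)"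
  shows "blk a b r \<in> Yw q n"
proof -
  have ab: "1 \<le> a" "1 \<le> b" "b < q * a" "a + b \<le> n" using assms(1) unfolding Qs_def by auto
  have r: "length r = n - a - b" "set r \<subseteq> {0,1}" "q_decreasing q r" "r = [] \<or> hd r = 0"
    using assms(2) unfolding Yw_def q_dec_words_def by auto
  have u: "replicate a 0 @ replicate b (1::nat) \<noteq> []" "last (replicate a 0 @ replicate b (1::nat)) = 1"
    using ab by auto
  have "q_decreasing q (blk a b r)"
    unfolding blk_def using qd_split[OF u r(4), of q] qd_block[of a q b] ab r(3) by simp
  moreover have "length (blk a b r) = n" using ab r unfolding blk_def by simp
  moreover have "set (blk a b r) \<subseteq> {0,1}" using r ab unfolding blk_def by auto
  moreover have "hd (blk a b r) = 0" using ab unfolding blk_def by (cases a) auto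
  ultimately show ?thesis unfolding Yw_def q_dec_words_def by auto
qed

lemma zeros_in_Yw:
  assumes "q \<ge> 1" "n \<ge> 1"
  shows "replicate n 0 \<in> Yw q n"
proof -
  have "q_decreasing q (replicate n 0 @ replicate 0 1)"
    using qd_block[of n q 0] assms by simp
  then show ?thesis using assms unfolding Yw_def q_dec_words_def by (cases n) auto
qed

lemma Yw_decomp:
  assumes "w \<in> Yw q n" "n \<ge> 1" "w \<noteq> replicate n 0"
  shows "\<exists>a b r. (a, b) \<in> Qs q n \<and> r \<in> Yw q (n - a - b) \<and> w = blk a b r"
proof -
  have w: "length w = n" "set w \<subseteq> {0,1}" "q_decreasing q w" "w = [] \<or> hd w = 0"
    using assms(1) unfolding Yw_def q_dec_words_def by auto
  define a where "a = length (takeWhile (\<lambda>x. x = 0) w)"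
  define w1 where "w1 = dropWhile (\<lambda>x. x = 0) w"
  define b where "b = length (takeWhile (\<lambda>x. x = 1) w1)"
  define r where "r = dropWhile (\<lambda>x. x = 1) w1"
  have tw0: "takeWhile (\<lambda>x. x = 0) w = replicate a 0"
    unfolding a_def by (metis (mono_tags) replicate_length_same set_takeWhileD)
  have tw1: "takeWhile (\<lambda>x. x = 1) w1 = replicate b 1"
    unfolding b_def by (metis (mono_tags) replicate_length_same set_takeWhileD)
  have weq: "w = replicate a 0 @ w1" using tw0 unfolding w1_def by (metis takeWhile_dropWhile_id)
  have w1eq: "w1 = replicate b 1 @ r" using tw1 unfolding r_def by (metis takeWhile_dropWhile_id)
  have wne: "w \<noteq> []" using w(1) assms(2) by auto
  then have hw: "hd w = 0" using w(4) by simp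
  have a1: "a \<ge> 1"
  proof -
    have "takeWhile (\<lambda>x. x = 0) w \<noteq> []" using wne hw by (cases w) auto
    then show ?thesis unfolding a_def by (cases "takeWhile (\<lambda>x. x = 0) w") auto
  qed
  have w1ne: "w1 \<noteq> []"
  proof
    assume "w1 = []"
    then have "w = replicate a 0" using weq by simp
    moreover then have "a = n" using w(1) by simp
    ultimately show False using assms(3) by simp
  qed
  have sw1: "set w1 \<subseteq> {0,1}" using w(2) weq by auto
  have "hd w1 \<noteq> 0" using hd_dropWhile[of "\<lambda>x. x = 0" w] w1ne unfolding w1_def by simp
  moreover have "hd w1 \<in> set w1" using w1ne by simp
  ultimately have hw1: "hd w1 = 1" using sw1 by auto
  have b1: "b \<ge> 1"
  proof -
    have "takeWhile (\<lambda>x. x = 1) w1 \<noteq> []" using w1ne hw1 by (cases w1) auto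
    then show ?thesis unfolding b_def by (cases "takeWhile (\<lambda>x. x = 1) w1") auto
  qed
  have sr: "set r \<subseteq> {0,1}" using sw1 w1eq by auto
  have hr: "r = [] \<or> hd r = 0"
  proof (cases "r = []")
    case False
    then have "hd r \<noteq> 1" using hd_dropWhile[of "\<lambda>x. x = 1" w1] unfolding r_def by simp
    moreover have "hd r \<in> set r" using False by simp
    ultimately show ?thesis using sr by auto
  qed simp
  have wb: "w = blk a b r" unfolding blk_def using weq w1eq by simp
  have u: "replicate a 0 @ replicate b (1::nat) \<noteq> []" "last (replicate a 0 @ replicate b (1::nat)) = 1"
    using b1 by auto
  have "q_decreasing q (replicate a 0 @ replicate b 1) \<and> q_decreasing q r"
    using qd_split[OF u hr, of q] w(3) wb unfolding blk_def by simp
  then have bq: "b < q * a" and qr: "q_decreasing q r" using qd_block[of a q b] a1 by auto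
  have len: "a + b + length r = n" using w(1) wb unfolding blk_def by simp
  have "(a, b) \<in> Qs q n" using a1 b1 bq len unfolding Qs_def by auto
  moreover have "r \<in> Yw q (n - a - b)" using len sr qr hr unfolding Yw_def q_dec_words_def by auto
  ultimately show ?thesis using wb by blast
qed

lemma Y_rec:
  assumes "q \<ge> 1" "n \<ge> 1"
  shows "Yw q n = insert (replicate n 0) ((\<lambda>(p, r). blk (fst p) (snd p) r) ` (SIGMA p:Qs q n. Yw q (n - fst p - snd p)))"
proof
  show "Yw q n \<subseteq> insert (replicate n 0) ((\<lambda>(p, r). blk (fst p) (snd p) r) ` (SIGMA p:Qs q n. Yw q (n - fst p - snd p)))"
  proof
    fix w assume w: "w \<in> Yw q n"
    show "w \<in> insert (replicate n 0) ((\<lambda>(p, r). blk (fst p) (snd p) r) ` (SIGMA p:Qs q n. Yw q (n - fst p - snd p)))"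
    proof (cases "w = replicate n 0")
      case False
      then obtain a b r where "(a, b) \<in> Qs q n" "r \<in> Yw q (n - a - b)" "w = blk a b r"
        using Yw_decomp[OF w assms(2)] by blast
      then show ?thesis by (intro insertI2 image_eqI[where x = "((a, b), r)"]) auto
    qed simp
  qed
next
  show "insert (replicate n 0) ((\<lambda>(p, r). blk (fst p) (snd p) r) ` (SIGMA p:Qs q n. Yw q (n - fst p - snd p))) \<subseteq> Yw q n"
    using zeros_in_Yw[OF assms] blk_in_Yw by auto
qed

lemma Y_notin:
  "replicate n 0 \<notin> (\<lambda>(p, r). blk (fst p) (snd p) r) ` (SIGMA p:Qs q n. Yw q (n - fst p - snd p))"
proof
  assume "replicate n 0 \<in> (\<lambda>(p, r). blk (fst p) (snd p) r) ` (SIGMA p:Qs q n. Yw q (n - fst p - snd p))"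
  then obtain a b r where "(a, b) \<in> Qs q n" "replicate n 0 = blk a b r" by auto
  then have "1 \<in> set (replicate n (0::nat))" unfolding Qs_def blk_def by auto
  then show False by simp
qed

lemma Y_inj:
  "inj_on (\<lambda>(p, r). blk (fst p) (snd p) r) (SIGMA p:Qs q n. Yw q (n - fst p - snd p))"
proof (rule inj_onI)
  fix x y assume x: "x \<in> (SIGMA p:Qs q n. Yw q (n - fst p - snd p))" and y: "y \<in> (SIGMA p:Qs q n. Yw q (n - fst p - snd p))"
    and eq: "(\<lambda>(p, r). blk (fst p) (snd p) r) x = (\<lambda>(p, r). blk (fst p) (snd p) r) y"
  obtain a b r where xx: "x = ((a, b), r)" by (metis prod.collapse)
  obtain a' b' r' where yy: "y = ((a', b'), r')" by (metis prod.collapse)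
  have "b \<ge> 1" "r = [] \<or> hd r = 0" "b' \<ge> 1" "r' = [] \<or> hd r' = 0"
    using x y xx yy unfolding Qs_def Yw_def by auto
  from blk_inj[OF this] eq xx yy show "x = y" by simp
qed

lemma cnt_rep[simp]: "count_list (replicate n x) x = n"
  by (induct n) auto

lemma Y_sum:
  assumes "q \<ge> 1" "n \<ge> 1"
  shows "(\<Sum>w\<in>Yw q n. f w) = f (replicate n 0) + (\<Sum>p\<in>Qs q n. \<Sum>r\<in>Yw q (n - fst p - snd p). f (blk (fst p) (snd p) r))"
proof -
  have fS: "finite (SIGMA p:Qs q n. Yw q (n - fst p - snd p))"
    using fin_Qs fin_Yw by blast
  have "(\<Sum>w\<in>Yw q n. f w) = f (replicate n 0) + (\<Sum>w\<in>(\<lambda>(p, r). blk (fst p) (snd p) r) ` (SIGMA p:Qs q n. Yw q (n - fst p - snd p)). f w)"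
    by (subst Y_rec[OF assms], rule sum.insert) (use fS Y_notin in auto)
  also have "(\<Sum>w\<in>(\<lambda>(p, r). blk (fst p) (snd p) r) ` (SIGMA p:Qs q n. Yw q (n - fst p - snd p)). f w)
      = (\<Sum>(p, r)\<in>(SIGMA p:Qs q n. Yw q (n - fst p - snd p)). f (blk (fst p) (snd p) r))"
    by (subst sum.reindex[OF Y_inj]) (simp add: case_prod_beta)
  also have "\<dots> = (\<Sum>p\<in>Qs q n. \<Sum>r\<in>Yw q (n - fst p - snd p). f (blk (fst p) (snd p) r))"
    by (rule sum.Sigma[symmetric]) (use fin_Qs fin_Yw in auto)
  finally show ?thesis .
qed

lemma Qs_group:
  "(\<Sum>p\<in>Qs q n. h p) = (\<Sum>L=0..n. \<Sum>p\<in>Pp q L. h p)"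
proof -
  have "(\<Sum>L\<in>{0..n}. \<Sum>p\<in>{x. x \<in> Qs q n \<and> fst x + snd x = L}. h p) = (\<Sum>p\<in>Qs q n. h p)"
    by (rule sum.group) (use fin_Qs in \<open>auto simp: Qs_def\<close>)
  moreover have "\<And>L. L \<in> {0..n} \<Longrightarrow> {x. x \<in> Qs q n \<and> fst x + snd x = L} = Pp q L"
    unfolding Qs_def Pp_def by auto
  ultimately show ?thesis by simp
qed

lemma Y_card:
  assumes "q \<ge> 1" "n \<ge> 1"
  shows "card (Yw q n) = 1 + (\<Sum>L=0..n. card (Pp q L) * card (Yw q (n - L)))"
proof -
  have "card (Yw q n) = (\<Sum>w\<in>Yw q n. 1)" by simp
  also have "\<dots> = 1 + (\<Sum>p\<in>Qs q n. card (Yw q (n - fst p - snd p)))"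
    by (subst Y_sum[OF assms]) simp
  also have "\<dots> = 1 + (\<Sum>L=0..n. \<Sum>p\<in>Pp q L. card (Yw q (n - fst p - snd p)))"
    by (simp add: Qs_group)
  also have "\<dots> = 1 + (\<Sum>L=0..n. card (Pp q L) * card (Yw q (n - L)))"
  proof -
    have "\<And>L. (\<Sum>p\<in>Pp q L. card (Yw q (n - fst p - snd p))) = card (Pp q L) * card (Yw q (n - L))"
    proof -
      fix L
      have "(\<Sum>p\<in>Pp q L. card (Yw q (n - fst p - snd p))) = (\<Sum>p\<in>Pp q L. card (Yw q (n - L)))"
        by (rule sum.cong) (auto simp: Pp_def)
      then show "(\<Sum>p\<in>Pp q L. card (Yw q (n - fst p - snd p))) = card (Pp q L) * card (Yw q (n - L))"
        by simp
    qed
    then show ?thesis by simp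
  qed
  finally show ?thesis .
qed

lemma Y_cnt:
  assumes "q \<ge> 1" "n \<ge> 1"
  shows "(\<Sum>w\<in>Yw q n. count_list w 0) = n + (\<Sum>L=0..n. (\<Sum>p\<in>Pp q L. fst p) * card (Yw q (n - L))
            + card (Pp q L) * (\<Sum>w\<in>Yw q (n - L). count_list w 0))"
proof -
  have "(\<Sum>w\<in>Yw q n. count_list w 0) = n + (\<Sum>p\<in>Qs q n. \<Sum>r\<in>Yw q (n - fst p - snd p). fst p + count_list r 0)"
    by (subst Y_sum[OF assms]) (simp add: blk_def)
  also have "\<dots> = n + (\<Sum>L=0..n. \<Sum>p\<in>Pp q L. \<Sum>r\<in>Yw q (n - fst p - snd p). fst p + count_list r 0)"
    by (simp add: Qs_group)
  also have "\<dots> = n + (\<Sum>L=0..n. (\<Sum>p\<in>Pp q L. fst p) * card (Yw q (n - L))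
            + card (Pp q L) * (\<Sum>w\<in>Yw q (n - L). count_list w 0))"
  proof -
    have "\<And>L. (\<Sum>p\<in>Pp q L. \<Sum>r\<in>Yw q (n - fst p - snd p). fst p + count_list r 0)
       = (\<Sum>p\<in>Pp q L. fst p) * card (Yw q (n - L)) + card (Pp q L) * (\<Sum>w\<in>Yw q (n - L). count_list w 0)"
    proof -
      fix L
      have "(\<Sum>p\<in>Pp q L. \<Sum>r\<in>Yw q (n - fst p - snd p). fst p + count_list r 0)
          = (\<Sum>p\<in>Pp q L. fst p * card (Yw q (n - L)) + (\<Sum>w\<in>Yw q (n - L). count_list w 0))"
        by (rule sum.cong) (auto simp: Pp_def sum.distrib)
      then show "?thesis L" by (simp add: sum.distrib sum_distrib_right)
    qed
    then show ?thesis by simp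
  qed
  finally show ?thesis .
qed



definition Pa :: "nat \<Rightarrow> nat \<Rightarrow> (nat \<times> nat) set" where
  "Pa q n = {(a, b). 1 \<le> a \<and> b < q * a \<and> a + b = n}"

lemma fin_Pa: "finite (Pa q n)"
proof -
  have "Pa q n \<subseteq> {..n} \<times> {..n}" unfolding Pa_def by auto
  then show ?thesis by (rule finite_subset) simp
qed

lemma Pa_0: "Pa q 0 = {}" "Pp q 0 = {}"
  unfolding Pa_def Pp_def by auto

lemma Pa_Pp:
  assumes "q \<ge> 1" "L \<ge> 1"
  shows "Pa q L = insert (L, 0) (Pp q L)" "(L, 0) \<notin> Pp q L"
proof -
  show "Pa q L = insert (L, 0) (Pp q L)"
    using assms unfolding Pa_def Pp_def by (auto simp: Suc_le_eq)
  show "(L, 0) \<notin> Pp q L" unfolding Pp_def by auto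
qed

lemma Pa_rec:
  "Pa q L = (\<lambda>b. (L - b, b)) ` {..<min q L} \<union> (\<lambda>p. (fst p + 1, snd p + q)) ` Pa q (L - Suc q)"
proof
  show "Pa q L \<subseteq> (\<lambda>b. (L - b, b)) ` {..<min q L} \<union> (\<lambda>p. (fst p + 1, snd p + q)) ` Pa q (L - Suc q)"
  proof
    fix x assume x: "x \<in> Pa q L"
    obtain a b where ab: "x = (a, b)" by (cases x)
    have h: "1 \<le> a" "b < q * a" "a + b = L" using x ab unfolding Pa_def by auto
    show "x \<in> (\<lambda>b. (L - b, b)) ` {..<min q L} \<union> (\<lambda>p. (fst p + 1, snd p + q)) ` Pa q (L - Suc q)"
    proof (cases "b < q")
      case True
      then have "b \<in> {..<min q L}" using h by auto
      then show ?thesis using ab h by (auto intro!: image_eqI[where x = b])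
    next
      case False
      have a2: "a \<ge> 2"
      proof (rule ccontr)
        assume "\<not> a \<ge> 2"
        then have "a = 1" using h(1) by simp
        then show False using h(2) False by simp
      qed
      have "(a - 1, b - q) \<in> Pa q (L - Suc q)"
      proof -
        have "b - q < q * (a - 1)" using h(2) False by (simp add: diff_mult_distrib2)
        then show ?thesis using a2 h False unfolding Pa_def by auto
      qed
      then show ?thesis using ab a2 False by (auto intro!: image_eqI[where x = "(a - 1, b - q)"])
    qed
  qed
next
  show "(\<lambda>b. (L - b, b)) ` {..<min q L} \<union> (\<lambda>p. (fst p + 1, snd p + q)) ` Pa q (L - Suc q) \<subseteq> Pa q L"
  proof
    fix x assume "x \<in> (\<lambda>b. (L - b, b)) ` {..<min q L} \<union> (\<lambda>p. (fst p + 1, snd p + q)) ` Pa q (L - Suc q)"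
    then show "x \<in> Pa q L"
    proof
      assume "x \<in> (\<lambda>b. (L - b, b)) ` {..<min q L}"
      then obtain b where b: "b < q" "b < L" "x = (L - b, b)" by auto
      have "b < q * (L - b)"
      proof -
        have "q * 1 \<le> q * (L - b)" using b by (intro mult_le_mono2) auto
        then show ?thesis using b(1) by linarith
      qed
      then show ?thesis using b unfolding Pa_def by auto
    next
      assume "x \<in> (\<lambda>p. (fst p + 1, snd p + q)) ` Pa q (L - Suc q)"
      then obtain a b where ab: "1 \<le> a" "b < q * a" "a + b = L - Suc q" "x = (a + 1, b + q)"
        unfolding Pa_def by auto
      then have "L \<ge> Suc q" by simp
      then show ?thesis using ab unfolding Pa_def by auto
    qed
  qed
qed

lemma Pa_disj: "(\<lambda>b. (L - b, b)) ` {..<min q L} \<inter> (\<lambda>p. (fst p + 1, snd p + q)) ` Pa q (L - Suc q) = {}"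
  by auto

lemma Pa_sum:
  "(\<Sum>p\<in>Pa q L. f p) = (\<Sum>b<min q L. f (L - b, b)) + (\<Sum>p\<in>Pa q (L - Suc q). f (fst p + 1, snd p + q))"
proof -
  have "(\<Sum>p\<in>Pa q L. f p) = (\<Sum>p\<in>(\<lambda>b. (L - b, b)) ` {..<min q L}. f p) + (\<Sum>p\<in>(\<lambda>p. (fst p + 1, snd p + q)) ` Pa q (L - Suc q). f p)"
    by (subst Pa_rec, rule sum.union_disjoint) (use fin_Pa Pa_disj in auto)
  also have "(\<Sum>p\<in>(\<lambda>b. (L - b, b)) ` {..<min q L}. f p) = (\<Sum>b<min q L. f (L - b, b))"
    by (rule sum.reindex_cong[where l = "\<lambda>b. (L - b, b)"]) (auto simp: inj_on_def)
  also have "(\<Sum>p\<in>(\<lambda>p. (fst p + 1, snd p + q)) ` Pa q (L - Suc q). f p) = (\<Sum>p\<in>Pa q (L - Suc q). f (fst p + 1, snd p + q))"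
    by (rule sum.reindex_cong[where l = "\<lambda>p. (fst p + 1, snd p + q)"]) (auto simp: inj_on_def)
  finally show ?thesis .
qed


lemma alg:
  fixes x y c s0 yv t bp b0p b b0 m m0 e k j :: "'a::idom"
  assumes "c*(1-x) = yv" "s0*(1-x) = t" "yv = 1 + k + bp*yv" "t = j + b0p*yv + bp*t" "bp = b - k"
   "b0p = b0 - j" "b = m + x*y*b" "b0 = m0 + x*y*(b0+b)" "m*(1-x) = e" "e*(1-x) = x - x*y"
   "m0*(1-x) = m" "k*(1-x) = x" "j*(1-x) = k"
  shows "c*(1-2*x+x*x*y) = 1 - x*y" "s0*(1-2*x+x*x*y)^2 = x*(1-y)"
proof -
  have h0': "m = b - x*y*b" using assms(7) by (metis add_diff_cancel_right')
  have h0: "(1-x*y)*b = m" unfolding h0' by algebra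
  have h1: "(1-x)^2*(1-x*y)*(1-bp) = 1-2*x+x*x*y"
  proof -
    have "(1-x)^2*(1-x*y)*(1-bp) = (1-x)^2*(1-x*y) - ((1-x*y)*b)*(1-x)*(1-x) + (1-x*y)*(1-x)*(k*(1-x))"
      unfolding assms(5) by algebra
    also have "\<dots> = (1-x)^2*(1-x*y) - (e*(1-x)) + (1-x*y)*(1-x)*x"
      unfolding h0 assms(12) assms(9) by simp
    also have "\<dots> = 1-2*x+x*x*y" unfolding assms(10) by algebra
    finally show ?thesis .
  qed
  have h2': "1 + k = yv - bp*yv" using assms(3) by (metis eq_diff_eq)
  have h2: "yv*(1-bp) = 1 + k" unfolding h2' by algebra
  show "c*(1-2*x+x*x*y) = 1 - x*y"
  proof -
    have "c*(1-2*x+x*x*y) = (c*(1-x))*(1-bp)*(1-x)*(1-x*y)" 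
      unfolding h1[symmetric] by algebra
    also have "\<dots> = (1+k)*(1-x)*(1-x*y)" using assms(1) h2 by simp
    also have "\<dots> = (1-x + k*(1-x))*(1-x*y)" by algebra
    also have "\<dots> = 1 - x*y" unfolding assms(12) by algebra
    finally show ?thesis .
  qed
  have h3': "j + b0p*yv = t - bp*t" using assms(4) by (metis eq_diff_eq)
  have h3: "t*(1-bp) = j + b0p*yv" unfolding h3' by algebra
  show "s0*(1-2*x+x*x*y)^2 = x*(1-y)"
  proof -
    have "s0*(1-2*x+x*x*y)^2 = (s0*(1-x))*(1-bp)*((1-x)^3*(1-x*y)^2*(1-bp))"
      unfolding h1[symmetric] by algebra
    also have "\<dots> = (j + b0p*yv)*((1-x)^3*(1-x*y)^2*(1-bp))" using assms(2) h3 by simp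
    also have "\<dots> = j*(1-x)^3*(1-x*y)^2*(1-bp) + b0p*(yv*(1-bp))*((1-x)^3*(1-x*y)^2)"
      by algebra
    also have "\<dots> = j*(1-x)^3*(1-x*y)^2*(1-bp) + b0p*(1+k)*((1-x)^3*(1-x*y)^2)"
      using h2 by simp
    also have "\<dots> = x*(1-y)" using assms(5-13) h0 h1 by algebra
    finally show ?thesis .
  qed
qed


lemma m1X_nth: "((f :: rat fps) * (1 - fps_X)) $ n = (if n = 0 then f $ 0 else f $ n - f $ (n - 1))"
proof -
  have "f * (1 - fps_X) = f - fps_X * f" by (simp add: algebra_simps)
  then show ?thesis by simp
qed

definition "yF q = Abs_fps (\<lambda>n. of_nat (card (Yw q n)) :: rat)"
definition "tF q = Abs_fps (\<lambda>n. of_nat (\<Sum>w\<in>Yw q n. count_list w 0) :: rat)"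
definition "cF q = Abs_fps (\<lambda>n. of_nat (card (q_dec_words q n)) :: rat)"
definition "s0F q = Abs_fps (\<lambda>n. of_nat (letter_total q 0 n) :: rat)"
definition "bpF q = Abs_fps (\<lambda>n. of_nat (card (Pp q n)) :: rat)"
definition "b0pF q = Abs_fps (\<lambda>n. of_nat (\<Sum>p\<in>Pp q n. fst p) :: rat)"
definition "bF q = Abs_fps (\<lambda>n. of_nat (card (Pa q n)) :: rat)"
definition "b0F q = Abs_fps (\<lambda>n. of_nat (\<Sum>p\<in>Pa q n. fst p) :: rat)"
definition "mF q = Abs_fps (\<lambda>n. of_nat (min q n) :: rat)"
definition "m0F q = Abs_fps (\<lambda>n. of_nat (\<Sum>b<min q n. n - b) :: rat)"
definition "e1F q = Abs_fps (\<lambda>n. if 1 \<le> n \<and> n \<le> q then 1 else 0 :: rat)"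
definition "K1 = Abs_fps (\<lambda>n. if n = 0 then 0 else 1 :: rat)"
definition "JF = Abs_fps (\<lambda>n. of_nat n :: rat)"

lemma qdw0: "q_dec_words q 0 = {[]}"
  unfolding q_dec_words_def q_decreasing_def by auto

lemma Yw0: "Yw q 0 = {[]}"
  unfolding Yw_def qdw0 by auto

lemma E_c: "cF q * (1 - fps_X) = yF q"
proof (rule fps_ext)
  fix n show "(cF q * (1 - fps_X)) $ n = yF q $ n"
  proof (cases n)
    case 0 then show ?thesis by (simp add: m1X_nth cF_def yF_def qdw0 Yw0)
  next
    case (Suc m)
    have "card (q_dec_words q (Suc m)) = card (Yw q (Suc m)) + card (q_dec_words q m)"
      using S_sum[where q=q and n=m and f="\<lambda>_. (1::nat)"] by simp
    then show ?thesis using Suc by (simp add: m1X_nth cF_def yF_def)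
  qed
qed

lemma E_s0: "s0F q * (1 - fps_X) = tF q"
proof (rule fps_ext)
  fix n show "(s0F q * (1 - fps_X)) $ n = tF q $ n"
  proof (cases n)
    case 0 then show ?thesis by (simp add: m1X_nth s0F_def tF_def letter_total_def qdw0 Yw0)
  next
    case (Suc m)
    have "letter_total q 0 (Suc m) = (\<Sum>w\<in>Yw q (Suc m). count_list w 0) + letter_total q 0 m"
      unfolding letter_total_def using S_sum[where q=q and n=m and f="\<lambda>w. count_list w 0"] by simp
    then show ?thesis using Suc by (simp add: m1X_nth s0F_def tF_def)
  qed
qed

lemma E_y:
  assumes "q \<ge> 1"
  shows "yF q = 1 + K1 + bpF q * yF q"
proof (rule fps_ext)
  fix n show "yF q $ n = (1 + K1 + bpF q * yF q) $ n"
  proof (cases "n = 0")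
    case True then show ?thesis by (simp add: yF_def K1_def bpF_def Yw0 Pa_0)
  next
    case False
    then have "card (Yw q n) = 1 + (\<Sum>L=0..n. card (Pp q L) * card (Yw q (n - L)))"
      using Y_card[OF assms] by simp
    then show ?thesis using False by (simp add: yF_def K1_def bpF_def fps_mult_nth)
  qed
qed

lemma E_t:
  assumes "q \<ge> 1"
  shows "tF q = JF + b0pF q * yF q + bpF q * tF q"
proof (rule fps_ext)
  fix n show "tF q $ n = (JF + b0pF q * yF q + bpF q * tF q) $ n"
  proof (cases "n = 0")
    case True then show ?thesis by (simp add: tF_def JF_def b0pF_def bpF_def Yw0 Pa_0)
  next
    case False
    then have "(\<Sum>w\<in>Yw q n. count_list w 0) = n + (\<Sum>L=0..n. (\<Sum>p\<in>Pp q L. fst p) * card (Yw q (n - L))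
            + card (Pp q L) * (\<Sum>w\<in>Yw q (n - L). count_list w 0))"
      using Y_cnt[OF assms] by simp
    then have "(of_nat (\<Sum>w\<in>Yw q n. count_list w 0) :: rat) = of_nat (n + (\<Sum>L=0..n. (\<Sum>p\<in>Pp q L. fst p) * card (Yw q (n - L))
            + card (Pp q L) * (\<Sum>w\<in>Yw q (n - L). count_list w 0)))" by simp
    then show ?thesis
      by (simp add: tF_def JF_def b0pF_def bpF_def yF_def fps_mult_nth sum.distrib)
  qed
qed

lemma E_bp:
  assumes "q \<ge> 1"
  shows "bpF q = bF q - K1" "b0pF q = b0F q - JF"
proof -
  show "bpF q = bF q - K1"
  proof (rule fps_ext)
    fix n show "bpF q $ n = (bF q - K1) $ n"
    proof (cases "n = 0")
      case True then show ?thesis by (simp add: bpF_def bF_def K1_def Pa_0)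
    next
      case False
      then have "card (Pa q n) = Suc (card (Pp q n))"
        using Pa_Pp[OF assms, of n] fin_Pp by simp
      then show ?thesis using False by (simp add: bpF_def bF_def K1_def)
    qed
  qed
  show "b0pF q = b0F q - JF"
  proof (rule fps_ext)
    fix n show "b0pF q $ n = (b0F q - JF) $ n"
    proof (cases "n = 0")
      case True then show ?thesis by (simp add: b0pF_def b0F_def JF_def Pa_0)
    next
      case False
      then have "(\<Sum>p\<in>Pa q n. fst p) = n + (\<Sum>p\<in>Pp q n. fst p)"
        using Pa_Pp[OF assms, of n] fin_Pp by simp
      then have "(of_nat (\<Sum>p\<in>Pa q n. fst p) :: rat) = of_nat n + of_nat (\<Sum>p\<in>Pp q n. fst p)"
        by simp
      then show ?thesis using False by (simp add: b0pF_def b0F_def JF_def)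
    qed
  qed
qed

lemma E_b: "bF q = mF q + fps_X ^ Suc q * bF q"
proof (rule fps_ext)
  fix n
  have "card (Pa q n) = min q n + card (Pa q (n - Suc q))"
    using Pa_sum[where q=q and L=n and f="\<lambda>_. (1::nat)"] by simp
  moreover have "n < Suc q \<Longrightarrow> Pa q (n - Suc q) = {}" using Pa_0 by simp
  ultimately show "bF q $ n = (mF q + fps_X ^ Suc q * bF q) $ n"
    by (simp add: bF_def mF_def fps_X_power_mult_nth del: power_Suc)
qed

lemma E_b0: "b0F q = m0F q + fps_X ^ Suc q * (b0F q + bF q)"
proof (rule fps_ext)
  fix n
  have "(\<Sum>p\<in>Pa q n. fst p) = (\<Sum>b<min q n. n - b) + (\<Sum>p\<in>Pa q (n - Suc q). fst p + 1)"
    using Pa_sum[where q=q and L=n and f=fst] by simp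
  also have "\<dots> = (\<Sum>b<min q n. n - b) + (\<Sum>p\<in>Pa q (n - Suc q). fst p) + card (Pa q (n - Suc q))"
    by (subst sum.distrib) simp
  finally have h: "(\<Sum>p\<in>Pa q n. fst p) = (\<Sum>b<min q n. n - b) + (\<Sum>p\<in>Pa q (n - Suc q). fst p) + card (Pa q (n - Suc q))" .
  then have H: "(of_nat (\<Sum>p\<in>Pa q n. fst p) :: rat) = of_nat (\<Sum>b<min q n. n - b) + of_nat (\<Sum>p\<in>Pa q (n - Suc q). fst p) + of_nat (card (Pa q (n - Suc q)))"
    by (simp only: of_nat_add)
  show "b0F q $ n = (m0F q + fps_X ^ Suc q * (b0F q + bF q)) $ n"
  proof (cases "n < Suc q")
    case True
    then have "Pa q (n - Suc q) = {}" using Pa_0 by simp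
    then show ?thesis using H True by (simp only: b0F_def bF_def m0F_def fps_X_power_mult_nth fps_add_nth fps_nth_Abs_fps if_True) simp
  next
    case False
    then show ?thesis using H by (simp only: b0F_def bF_def m0F_def fps_X_power_mult_nth fps_add_nth fps_nth_Abs_fps if_False)
  qed
qed

lemma E_m: "mF q * (1 - fps_X) = e1F q"
  by (rule fps_ext) (auto simp: m1X_nth mF_def e1F_def)

lemma E_e1: assumes "q \<ge> 1" shows "e1F q * (1 - fps_X) = fps_X - fps_X ^ Suc q"
proof (rule fps_ext)
  fix n show "(e1F q * (1 - fps_X)) $ n = (fps_X - fps_X ^ Suc q) $ n"
    using assms by (cases n) (auto simp: m1X_nth e1F_def fps_X_power_nth simp del: power_Suc)
qed

lemma sum_shift1: "k \<le> Suc m \<Longrightarrow> (\<Sum>b<k. Suc m - b) = (\<Sum>b<k. m - b) + k"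
proof -
  assume k: "k \<le> Suc m"
  have "(\<Sum>b<k. Suc m - b) = (\<Sum>b<k. (m - b) + 1)"
    by (rule sum.cong) (use k in auto)
  also have "\<dots> = (\<Sum>b<k. m - b) + k" by (subst sum.distrib) simp
  finally show ?thesis .
qed

lemma E_m0: "m0F q * (1 - fps_X) = mF q"
proof (rule fps_ext)
  fix n show "(m0F q * (1 - fps_X)) $ n = mF q $ n"
  proof (cases n)
    case 0 then show ?thesis by (simp add: m1X_nth m0F_def mF_def)
  next
    case (Suc m)
    have "(\<Sum>b<min q (Suc m). Suc m - b) = (\<Sum>b<min q m. m - b) + min q (Suc m)"
    proof (cases "Suc m \<le> q")
      case True
      then have "(\<Sum>b<min q (Suc m). Suc m - b) = (\<Sum>b<Suc m. Suc m - b)" by simp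
      also have "\<dots> = (\<Sum>b<m. Suc m - b) + 1" by simp
      also have "\<dots> = (\<Sum>b<m. m - b) + m + 1" using sum_shift1[of m m] by simp
      finally show ?thesis using True by simp
    next
      case False
      then show ?thesis using sum_shift1[of q m] by simp
    qed
    then have "(of_nat (\<Sum>b<min q (Suc m). Suc m - b) :: rat) = of_nat (\<Sum>b<min q m. m - b) + of_nat (min q (Suc m))"
      by (simp only: of_nat_add)
    then show ?thesis using Suc by (simp only: m1X_nth m0F_def mF_def fps_nth_Abs_fps) simp
  qed
qed

lemma E_K1: "K1 * (1 - fps_X) = fps_X"
  by (rule fps_ext) (auto simp: m1X_nth K1_def)

lemma E_J: "JF * (1 - fps_X) = K1"
  by (rule fps_ext) (auto simp: m1X_nth K1_def JF_def)



lemma alg2: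
  fixes x y c cd s0 s1 Q :: "'a::idom"
  assumes "c*(1-2*x+x*x*y) = 1 - x*y"
    "cd*(1-2*x+x*x*y) + c*(-2+(Q+2)*(x*y)) = -((Q+1)*y)"
    "s0*(1-2*x+x*x*y)^2 = x*(1-y)" "s1 = x*cd - s0"
  shows "s1*(1-2*x+x*x*y)^2 = x*(1 - Q*y + Q*(x*y) - 2*(x*y) + x*x*y*y)"
  using assms by algebra

lemma cnt01: "set w \<subseteq> {0, 1::nat} \<Longrightarrow> count_list w 0 + count_list w 1 = length w"
  using sum_count_set[of w "{0,1::nat}"] by simp

lemma lt01: "letter_total q 1 n + letter_total q 0 n = n * card (q_dec_words q n)"
proof -
  have "letter_total q 1 n + letter_total q 0 n = (\<Sum>w\<in>q_dec_words q n. count_list w 0 + count_list w 1)"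
    unfolding letter_total_def by (simp add: sum.distrib)
  also have "\<dots> = (\<Sum>w\<in>q_dec_words q n. n)"
  proof (rule sum.cong)
    fix w assume "w \<in> q_dec_words q n"
    then show "count_list w 0 + count_list w 1 = n" using cnt01[of w] unfolding q_dec_words_def by simp
  qed simp
  finally show ?thesis by simp
qed

lemma div_eq: "(A :: rat fps) * D = N \<Longrightarrow> D $ 0 \<noteq> 0 \<Longrightarrow> A = N / D"
proof -
  assume h: "A * D = N" "D $ 0 \<noteq> 0"
  have "N / D = N * inverse D" using h(2) by (rule fps_divide_unit)
  also have "\<dots> = A * (D * inverse D)" using h(1) by (simp add: mult.assoc)
  also have "\<dots> = A" using inverse_mult_eq_1'[OF h(2)] by simp
  finally show ?thesis by simp
qed

theorem corollary3:
  fixes q :: nat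
  assumes "q \<ge> 1"
  shows "Abs_fps (\<lambda>n. of_nat (letter_total q 1 n) :: rat) =
           fps_X * (1 - of_nat q * fps_X ^ q + of_nat q * fps_X ^ (q + 1)
                      - 2 * fps_X ^ (q + 1) + fps_X ^ (2 * q + 2))
           / (1 - 2 * fps_X + fps_X ^ (q + 2)) ^ 2
       \<and> Abs_fps (\<lambda>n. of_nat (letter_total q 0 n) :: rat) =
           fps_X * (1 - fps_X ^ q) / (1 - 2 * fps_X + fps_X ^ (q + 2)) ^ 2"
proof -
  define x :: "rat fps" where "x = fps_X"
  define y :: "rat fps" where "y = fps_X ^ q"
  have xq1: "fps_X ^ Suc q = x * y" unfolding x_def y_def by simp
  have xq2: "fps_X ^ (q + 2) = x * x * y" unfolding x_def y_def by (simp add: mult.assoc)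
  have xq1': "fps_X ^ (q + 1) = x * y" using xq1 by simp
  have xq3: "fps_X ^ (2 * q + 2) = x * x * y * y"
  proof -
    have e: "2 * q + 2 = q + q + 1 + 1" by simp
    show ?thesis unfolding x_def y_def e by (simp only: power_add power_one_right) (simp add: algebra_simps)
  qed
  have A: "cF q * (1 - 2 * x + x * x * y) = 1 - x * y"
      "s0F q * (1 - 2 * x + x * x * y)^2 = x * (1 - y)"
  proof -
    have b: "bF q = mF q + x * y * bF q" using E_b[of q] xq1 by simp
    have b0: "b0F q = m0F q + x * y * (b0F q + bF q)" using E_b0[of q] xq1 by simp
    have e1: "e1F q * (1 - x) = x - x * y" using E_e1[OF assms] xq1 x_def by simp
    show "cF q * (1 - 2 * x + x * x * y) = 1 - x * y"
      "s0F q * (1 - 2 * x + x * x * y)^2 = x * (1 - y)"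
      using alg[OF E_c[of q, folded x_def] E_s0[of q, folded x_def] E_y[OF assms] E_t[OF assms]
          E_bp(1)[OF assms] E_bp(2)[OF assms] b b0 E_m[of q, folded x_def] e1
          E_m0[of q, folded x_def] E_K1[folded x_def] E_J[folded x_def]] by simp_all
  qed
  have S1: "Abs_fps (\<lambda>n. of_nat (letter_total q 1 n) :: rat) = x * fps_deriv (cF q) - s0F q"
  proof (rule fps_ext)
    fix n show "Abs_fps (\<lambda>n. of_nat (letter_total q 1 n) :: rat) $ n = (x * fps_deriv (cF q) - s0F q) $ n"
    proof (cases n)
      case 0 then show ?thesis by (simp add: x_def s0F_def letter_total_def qdw0)
    next
      case (Suc m)
      have "letter_total q 1 n + letter_total q 0 n = n * card (q_dec_words q n)" by (rule lt01)
      then have "(of_nat (letter_total q 1 n) :: rat) = of_nat n * of_nat (card (q_dec_words q n)) - of_nat (letter_total q 0 n)"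
        by (metis add_diff_cancel_right' of_nat_add of_nat_mult)
      then show ?thesis using Suc by (simp add: x_def s0F_def cF_def)
    qed
  qed
  have dD: "fps_deriv (1 - 2 * x + x * x * y) = -2 + (of_nat q + 2) * (x * y)"
  proof -
    have "x * x * y = fps_X ^ Suc (Suc q)" unfolding x_def y_def by (simp add: mult.assoc)
    moreover have "fps_deriv (fps_X ^ Suc (Suc q) :: rat fps) = of_nat (Suc (Suc q)) * fps_X ^ Suc q"
      by (simp only: fps_deriv_power') simp
    ultimately show ?thesis using xq1 unfolding x_def by (simp add: algebra_simps)
  qed
  have dN: "fps_deriv (1 - x * y) = - ((of_nat q + 1) * y)"
  proof -
    have "fps_deriv (fps_X ^ Suc q :: rat fps) = of_nat (Suc q) * fps_X ^ q"
      by (simp only: fps_deriv_power') simp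
    then show ?thesis using xq1 unfolding y_def by (simp add: algebra_simps)
  qed
  have Dd: "fps_deriv (cF q) * (1 - 2 * x + x * x * y) + cF q * (-2 + (of_nat q + 2) * (x * y)) = - ((of_nat q + 1) * y)"
    using arg_cong[OF A(1), of fps_deriv] dD dN by (simp add: ac_simps)
  have S1eq: "Abs_fps (\<lambda>n. of_nat (letter_total q 1 n) :: rat) * (1 - 2 * x + x * x * y)^2
      = x * (1 - of_nat q * y + of_nat q * (x * y) - 2 * (x * y) + x * x * y * y)"
    by (rule alg2[OF A(1) Dd A(2) S1])
  have D0: "((1 - 2 * x + x * x * y)^2) $ 0 \<noteq> 0"
    unfolding x_def by (simp add: fps_square_nth)
  show ?thesis
  proof
    show "Abs_fps (\<lambda>n. of_nat (letter_total q 1 n) :: rat) =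
           fps_X * (1 - of_nat q * fps_X ^ q + of_nat q * fps_X ^ (q + 1)
                      - 2 * fps_X ^ (q + 1) + fps_X ^ (2 * q + 2))
           / (1 - 2 * fps_X + fps_X ^ (q + 2)) ^ 2"
      unfolding xq1' xq2 xq3 using div_eq[OF S1eq D0] by (simp add: x_def y_def)
    show "Abs_fps (\<lambda>n. of_nat (letter_total q 0 n) :: rat) =
           fps_X * (1 - fps_X ^ q) / (1 - 2 * fps_X + fps_X ^ (q + 2)) ^ 2"
      unfolding xq2 using div_eq[OF A(2) D0] by (simp add: x_def y_def s0F_def)
  qed
qed

end
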